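(* Let $D$ be a knot diagram that is ascending from a base point $b$. If a $2$-sided face of $D$ does not admit a Reidemeister II move, or a $3$-sided face of $D$ does not admit a Reidemeister III move, then $b$ lies on the boundary of that face. Moreover, there are at most two such faces in $D$.
   Context: An oriented knot diagram is ascending from a point $b$ (not a crossing) if, travelling along the knot from $b$ in the direction of the orientation, every crossing is first met along its under-strand and later along its over-strand. A $2$-sided face admits a Reidemeister II move when one of its two edges is the over-strand at both of its crossings; a $3$-sided face admits a Reidemeister III move when one of its three edges is the over-strand at both of its crossings (equivalently, it is not the case that each edge has one over- and one under-crossing). *)

theory Defs
  imports Main
begin

text \<open>
Travelling once around the knot we pass through crossings at the positions
0, ..., N-1 (N = 2 * number of crossings).  cr i is the crossing met at
position i, ov i says whether the knot passes over at position i,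
lr i says whether the other strand at that crossing passes from the right to
the left of the strand traversed at position i.  Edge e (e < N) is the arc of
the knot from position e to position (e+1) mod N.
Darts are pairs (e, d): edge e traversed forwards (d = True) or backwards.
The rotation system sigma (counter-clockwise order of half-edges at a crossing)
is determined by lr; faces are the orbits of the face-tracing permutation
sigma o alpha; planarity is expressed by Euler's formula V - E + F = 2.
\<close>

definition nxt :: "nat \<Rightarrow> nat \<Rightarrow> nat" where
  "nxt N i = (Suc i) mod N"

definition prv :: "nat \<Rightarrow> nat \<Rightarrow> nat" where
  "prv N i = (i + N - 1) mod N"

definition partner :: "nat \<Rightarrow> (nat \<Rightarrow> 'c) \<Rightarrow> nat \<Rightarrow> nat" where
  "partner N cr i = (THE j. j < N \<and> j \<noteq> i \<and> cr j = cr i)"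

definition darts :: "nat \<Rightarrow> (nat \<times> bool) set" where
  "darts N = {..<N} \<times> UNIV"

definition alpha :: "nat \<times> bool \<Rightarrow> nat \<times> bool" where
  "alpha d = (fst d, \<not> snd d)"

text \<open>Dart (i, True) leaves the crossing at position i along edge i;
dart (prv i, False) leaves it backwards along edge prv i.\<close>
definition sigma :: "nat \<Rightarrow> (nat \<Rightarrow> 'c) \<Rightarrow> (nat \<Rightarrow> bool) \<Rightarrow> nat \<times> bool \<Rightarrow> nat \<times> bool" where
  "sigma N cr lr d =
     (if snd d then
        (let i = fst d; j = partner N cr i in
           if lr i then (j, True) else (prv N j, False))
      else
        (let i = nxt N (fst d); j = partner N cr i in
           if lr i then (prv N j, False) else (j, True)))"

definition phi :: "nat \<Rightarrow> (nat \<Rightarrow> 'c) \<Rightarrow> (nat \<Rightarrow> bool) \<Rightarrow> nat \<times> bool \<Rightarrow> nat \<times> bool" where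
  "phi N cr lr d = sigma N cr lr (alpha d)"

definition face_of :: "nat \<Rightarrow> (nat \<Rightarrow> 'c) \<Rightarrow> (nat \<Rightarrow> bool) \<Rightarrow> nat \<times> bool \<Rightarrow> (nat \<times> bool) set" where
  "face_of N cr lr d = {(phi N cr lr ^^ k) d | k. True}"

definition faces :: "nat \<Rightarrow> (nat \<Rightarrow> 'c) \<Rightarrow> (nat \<Rightarrow> bool) \<Rightarrow> (nat \<times> bool) set set" where
  "faces N cr lr = face_of N cr lr ` darts N"

definition knot_diagram :: "nat \<Rightarrow> (nat \<Rightarrow> 'c) \<Rightarrow> (nat \<Rightarrow> bool) \<Rightarrow> (nat \<Rightarrow> bool) \<Rightarrow> bool" where
  "knot_diagram N cr ov lr \<longleftrightarrow>
     (\<forall>i<N. card {j. j < N \<and> cr j = cr i} = 2) \<and>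
     (\<forall>i<N. \<forall>j<N. i \<noteq> j \<and> cr i = cr j \<longrightarrow> ov i \<noteq> ov j \<and> lr i \<noteq> lr j) \<and>
     card (faces N cr lr) = card (cr ` {..<N}) + 2"

text \<open>Travel distance from the base point on edge b to position i:
position nxt b is met first (distance 0).\<close>
definition dist_from :: "nat \<Rightarrow> nat \<Rightarrow> nat \<Rightarrow> nat" where
  "dist_from N b i = (i + (N - 1 - b)) mod N"

definition ascending :: "nat \<Rightarrow> (nat \<Rightarrow> 'c) \<Rightarrow> (nat \<Rightarrow> bool) \<Rightarrow> nat \<Rightarrow> bool" where
  "ascending N cr ov b \<longleftrightarrow> b < N \<and>
     (\<forall>i<N. \<forall>j<N. i \<noteq> j \<and> cr i = cr j \<and> dist_from N b i < dist_from N b j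
        \<longrightarrow> \<not> ov i \<and> ov j)"

definition over_both :: "nat \<Rightarrow> (nat \<Rightarrow> bool) \<Rightarrow> nat \<Rightarrow> bool" where
  "over_both N ov e \<longleftrightarrow> ov e \<and> ov (nxt N e)"

definition admits_RII :: "nat \<Rightarrow> (nat \<Rightarrow> bool) \<Rightarrow> (nat \<times> bool) set \<Rightarrow> bool" where
  "admits_RII N ov F \<longleftrightarrow> card F = 2 \<and> (\<exists>d\<in>F. over_both N ov (fst d))"

definition admits_RIII :: "nat \<Rightarrow> (nat \<Rightarrow> bool) \<Rightarrow> (nat \<times> bool) set \<Rightarrow> bool" where
  "admits_RIII N ov F \<longleftrightarrow> card F = 3 \<and> (\<exists>d\<in>F. over_both N ov (fst d))"

definition bad_face :: "nat \<Rightarrow> (nat \<Rightarrow> bool) \<Rightarrow> (nat \<times> bool) set \<Rightarrow> bool" where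
  "bad_face N ov F \<longleftrightarrow>
     (card F = 2 \<and> \<not> admits_RII N ov F) \<or> (card F = 3 \<and> \<not> admits_RIII N ov F)"

end

theory Submission
  imports Defs
begin

lemma N_pos:
  assumes "knot_diagram N cr ov lr" shows "0 < N"
proof (rule ccontr)
  assume "\<not> 0 < N"
  hence "N = 0" by simp
  hence "faces N cr lr = {}" by (simp add: faces_def darts_def)
  thus False using assms by (simp add: knot_diagram_def)
qed

lemma partner_props:
  assumes "knot_diagram N cr ov lr" "i < N"
  shows "partner N cr i < N \<and> partner N cr i \<noteq> i \<and> cr (partner N cr i) = cr i"
    and "\<And>j. j < N \<Longrightarrow> j \<noteq> i \<Longrightarrow> cr j = cr i \<Longrightarrow> j = partner N cr i"
proof -
  have c: "card {j. j < N \<and> cr j = cr i} = 2" using assms by (simp add: knot_diagram_def)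
  then obtain x y where xy: "{j. j < N \<and> cr j = cr i} = {x, y}" "x \<noteq> y"
    by (auto simp: card_2_iff)
  have S: "\<And>j. (j < N \<and> cr j = cr i) \<longleftrightarrow> (j = x \<or> j = y)"
    using xy(1) unfolding set_eq_iff mem_Collect_eq by blast
  have ixy: "i = x \<or> i = y" using S[of i] assms(2) by blast
  define w where "w = (if i = x then y else x)"
  have w1: "w = x \<or> w = y" unfolding w_def by simp
  have wi: "w \<noteq> i" unfolding w_def using xy(2) ixy by simp
  have w2: "w < N \<and> cr w = cr i" using S[of w] w1 by blast
  have uniq: "j = w" if "j < N" "j \<noteq> i" "cr j = cr i" for j
  proof -
    have "j = x \<or> j = y" using S[of j] that(1,3) by blast
    then show ?thesis using that(2) ixy unfolding w_def by auto
  qed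
  have ex: "\<exists>!j. j < N \<and> j \<noteq> i \<and> cr j = cr i"
    using w2 wi uniq by (intro ex1I[of _ w]) auto
  have P: "partner N cr i = w"
    unfolding partner_def using w2 wi uniq by (intro the1_equality[OF ex]) auto
  show "partner N cr i < N \<and> partner N cr i \<noteq> i \<and> cr (partner N cr i) = cr i"
    using P w2 wi by simp
  show "\<And>j. j < N \<Longrightarrow> j \<noteq> i \<Longrightarrow> cr j = cr i \<Longrightarrow> j = partner N cr i"
    using P uniq by simp
qed

lemma partner_inv:
  assumes "knot_diagram N cr ov lr" "i < N"
  shows "partner N cr (partner N cr i) = i"
proof -
  let ?j = "partner N cr i"
  have j: "?j < N" "?j \<noteq> i" "cr ?j = cr i" using partner_props(1)[OF assms] by auto
  have "i = partner N cr ?j"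
    by (rule partner_props(2)[OF assms(1) j(1) assms(2)]) (use j in auto)
  then show ?thesis by simp
qed

lemma partner_ov:
  assumes "knot_diagram N cr ov lr" "i < N"
  shows "ov (partner N cr i) \<noteq> ov i" "lr (partner N cr i) \<noteq> lr i"
proof -
  have A: "\<forall>i<N. \<forall>j<N. i \<noteq> j \<and> cr i = cr j \<longrightarrow> ov i \<noteq> ov j \<and> lr i \<noteq> lr j"
    using assms(1) unfolding knot_diagram_def by blast
  have p: "partner N cr i < N \<and> partner N cr i \<noteq> i \<and> cr (partner N cr i) = cr i"
    using partner_props(1)[OF assms] .
  have "ov (partner N cr i) \<noteq> ov i \<and> lr (partner N cr i) \<noteq> lr i"
    using A p assms(2) by blast
  then show "ov (partner N cr i) \<noteq> ov i" "lr (partner N cr i) \<noteq> lr i" by auto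
qed

lemma nxt_eq: "e < N \<Longrightarrow> nxt N e = (if Suc e < N then Suc e else 0)"
proof (cases "Suc e < N")
  case False
  assume "e < N"
  then have "Suc e = N" using False by simp
  then show ?thesis by (simp add: nxt_def)
qed (auto simp: nxt_def)

lemma prv_eq: "j < N \<Longrightarrow> prv N j = (if j = 0 then N - 1 else j - 1)"
proof (cases "j = 0")
  case False
  assume "j < N"
  then have "j + N - 1 = (j - 1) + N" using False by simp
  then have "(j + N - 1) mod N = (j - 1) mod N" by simp
  then show ?thesis using False \<open>j < N\<close> by (simp add: prv_def)
qed (auto simp: prv_def)

lemma nxt_lt: "e < N \<Longrightarrow> nxt N e < N" by (simp add: nxt_eq)
lemma prv_lt: "j < N \<Longrightarrow> prv N j < N" by (simp add: prv_eq; arith)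
lemma nxt_prv: "j < N \<Longrightarrow> nxt N (prv N j) = j" by (auto simp: prv_eq nxt_eq)
lemma nxt_inj: "e < N \<Longrightarrow> f < N \<Longrightarrow> nxt N e = nxt N f \<Longrightarrow> e = f"
  by (auto simp: nxt_eq split: if_splits)

lemma dist_eq:
  assumes "b < N" "i < N"
  shows "dist_from N b i = (if b < i then i - b - 1 else i + N - 1 - b)"
proof (cases "b < i")
  case True
  have "i + (N - 1 - b) = (i - b - 1) + N" using True assms by simp
  then have "(i + (N - 1 - b)) mod N = (i - b - 1) mod N" by simp
  then show ?thesis using True assms unfolding dist_from_def by simp
next
  case False
  then show ?thesis using assms unfolding dist_from_def by simp
qed

lemma dist_lt: "b < N \<Longrightarrow> i < N \<Longrightarrow> dist_from N b i < N"
  by (simp add: dist_eq; arith)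

lemma dist_inj: "b < N \<Longrightarrow> i < N \<Longrightarrow> j < N \<Longrightarrow> dist_from N b i = dist_from N b j \<Longrightarrow> i = j"
  by (simp add: dist_eq split: if_splits)

lemma dist_nxt: "b < N \<Longrightarrow> e < N \<Longrightarrow> e \<noteq> b \<Longrightarrow> dist_from N b (nxt N e) = Suc (dist_from N b e)"
  by (simp add: dist_eq nxt_eq; intro conjI impI; arith)

lemma asc_ov:
  assumes "knot_diagram N cr ov lr" "ascending N cr ov b" "i < N"
  shows "ov i = (dist_from N b (partner N cr i) < dist_from N b i)"
proof -
  let ?j = "partner N cr i"
  have j: "?j < N" "?j \<noteq> i" "cr ?j = cr i" using partner_props(1)[OF assms(1,3)] by auto
  have b: "b < N" using assms(2) by (simp add: ascending_def)
  have ne: "dist_from N b ?j \<noteq> dist_from N b i" using dist_inj[OF b j(1) assms(3)] j(2) by blast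
  have A: "\<forall>i<N. \<forall>j<N. i \<noteq> j \<and> cr i = cr j \<and> dist_from N b i < dist_from N b j
        \<longrightarrow> \<not> ov i \<and> ov j" using assms(2) unfolding ascending_def by blast
  show ?thesis
  proof (cases "dist_from N b ?j < dist_from N b i")
    case True
    then have "\<not> ov ?j \<and> ov i" using A j assms(3) by blast
    then show ?thesis using True by simp
  next
    case False
    then have "dist_from N b i < dist_from N b ?j" using ne by simp
    then have "\<not> ov i \<and> ov ?j" using A j assms(3) by (metis (no_types))
    then show ?thesis using False by simp
  qed
qed

definition tlp :: "nat \<Rightarrow> nat \<times> bool \<Rightarrow> nat" where
  "tlp N u = (if snd u then fst u else nxt N (fst u))"
definition hdp :: "nat \<Rightarrow> nat \<times> bool \<Rightarrow> nat" where
  "hdp N u = (if snd u then nxt N (fst u) else fst u)"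

lemma phi_eq:
  "phi N cr lr u = (let i = hdp N u; j = partner N cr i in
      if lr i = snd u then (prv N j, False) else (j, True))"
  by (cases u) (auto simp: phi_def sigma_def alpha_def hdp_def Let_def)

lemma phi_props:
  assumes "knot_diagram N cr ov lr" "u \<in> darts N"
  shows "phi N cr lr u \<in> darts N"
    and "tlp N (phi N cr lr u) = partner N cr (hdp N u)"
    and "snd (phi N cr lr u) = (lr (hdp N u) \<noteq> snd u)"
proof -
  have u: "fst u < N" using assms(2) by (auto simp: darts_def)
  have h: "hdp N u < N" using u by (simp add: hdp_def nxt_lt)
  have p: "partner N cr (hdp N u) < N" using partner_props(1)[OF assms(1) h] by simp
  show "phi N cr lr u \<in> darts N" using p by (auto simp: phi_eq Let_def darts_def prv_lt)
  show "tlp N (phi N cr lr u) = partner N cr (hdp N u)" using p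
    by (auto simp: phi_eq Let_def tlp_def nxt_prv)
  show "snd (phi N cr lr u) = (lr (hdp N u) \<noteq> snd u)"
    by (auto simp: phi_eq Let_def)
qed

lemma dart_eq_hd:
  "u \<in> darts N \<Longrightarrow> v \<in> darts N \<Longrightarrow> snd u = snd v \<Longrightarrow> hdp N u = hdp N v \<Longrightarrow> u = v"
  by (cases u; cases v) (auto simp: darts_def hdp_def split: if_splits dest: nxt_inj)

lemma dart_eq_tl:
  "u \<in> darts N \<Longrightarrow> v \<in> darts N \<Longrightarrow> snd u = snd v \<Longrightarrow> tlp N u = tlp N v \<Longrightarrow> u = v"
  by (cases u; cases v) (auto simp: darts_def tlp_def split: if_splits dest: nxt_inj)

lemma phi_inj:
  assumes "knot_diagram N cr ov lr" "u \<in> darts N" "v \<in> darts N"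
    and "phi N cr lr u = phi N cr lr v"
  shows "u = v"
proof -
  have hu: "hdp N u < N" using assms(2) by (auto simp: hdp_def nxt_lt darts_def)
  have hv: "hdp N v < N" using assms(3) by (auto simp: hdp_def nxt_lt darts_def)
  have "partner N cr (hdp N u) = partner N cr (hdp N v)"
    using phi_props(2)[OF assms(1,2)] phi_props(2)[OF assms(1,3)] assms(4) by metis
  then have hh: "hdp N u = hdp N v" using partner_inv[OF assms(1) hu] partner_inv[OF assms(1) hv] by metis
  have "snd u = snd v"
    using phi_props(3)[OF assms(1,2)] phi_props(3)[OF assms(1,3)] assms(4) hh by metis
  then show ?thesis using dart_eq_hd[OF assms(2,3) _ hh] by simp
qed

lemma arith3:
  fixes t1 t2 t3 h1 h2 h3 :: nat
  assumes "ot2 = (\<not>oh1)" "ot3 = (\<not>oh2)" "ot1 = (\<not>oh3)"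
    "oh1 = (t2<h1)" "oh2 = (t3<h2)" "oh3=(t1<h3)" "t2\<noteq>h1" "t3\<noteq>h2" "t1\<noteq>h3"
    "\<not>(ot1\<and>oh1)" "\<not>(ot2\<and>oh2)" "\<not>(ot3\<and>oh3)"
    "(s1 \<and> h1 = Suc t1) \<or> (\<not>s1 \<and> t1 = Suc h1)"
    "(s2 \<and> h2 = Suc t2) \<or> (\<not>s2 \<and> t2 = Suc h2)"
    "(s3 \<and> h3 = Suc t3) \<or> (\<not>s3 \<and> t3 = Suc h3)"
  shows "s1 = s2 \<and> t1 = t2"
proof -
  have e: "oh1 = oh2" "oh2 = oh3" using assms(1-3,10-12) by blast+
  show ?thesis
  proof (cases oh1)
    case True
    then have "t2 < h1" "t3 < h2" "t1 < h3" using e assms(4-6) by auto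
    moreover have "h1 \<le> Suc t1" "h2 \<le> Suc t2" "h3 \<le> Suc t3" using assms(13-15) by auto
    ultimately have "t1 = t2" "t2 = t3" "h1 = Suc t1" "h2 = Suc t2" by linarith+
    then show ?thesis using assms(13,14) by auto
  next
    case False
    then have "h1 < t2" "h2 < t3" "h3 < t1" using e assms(4-9) by auto
    moreover have "t1 \<le> Suc h1" "t2 \<le> Suc h2" "t3 \<le> Suc h3" using assms(13-15) by auto
    ultimately have "t1 = t2" "t2 = t3" "t1 = Suc h1" "t2 = Suc h2" by linarith+
    then show ?thesis using assms(13,14) by auto
  qed
qed
lemma arith2:
  fixes t1 t2 h1 h2 :: nat
  assumes "ot2 = (\<not>oh1)" "ot1 = (\<not>oh2)"
    "oh1 = (t2<h1)" "oh2 = (t1<h2)" "t2\<noteq>h1" "t1\<noteq>h2"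
    "\<not>(ot1\<and>oh1)" "\<not>(ot2\<and>oh2)"
    "(s1 \<and> h1 = Suc t1) \<or> (\<not>s1 \<and> t1 = Suc h1)"
    "(s2 \<and> h2 = Suc t2) \<or> (\<not>s2 \<and> t2 = Suc h2)"
  shows "s1 = s2 \<and> t1 = t2"
proof -
  have e: "oh1 = oh2" using assms(1,2,7,8) by blast
  show ?thesis
  proof (cases oh1)
    case True
    then have "t2 < h1" "t1 < h2" using e assms(3,4) by auto
    moreover have "h1 \<le> Suc t1" "h2 \<le> Suc t2" using assms(9,10) by auto
    ultimately have "t1 = t2" "h1 = Suc t1" "h2 = Suc t2" by linarith+
    then show ?thesis using assms(9,10) by auto
  next
    case False
    then have "h1 < t2" "h2 < t1" using e assms(3-6) by auto
    moreover have "t1 \<le> Suc h1" "t2 \<le> Suc h2" using assms(9,10) by auto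
    ultimately have "t1 = t2" "t1 = Suc h1" "t2 = Suc h2" by linarith+
    then show ?thesis using assms(9,10) by auto
  qed
qed

lemma dart_C:
  assumes "b < N" "u \<in> darts N" "fst u \<noteq> b"
  shows "(snd u \<and> dist_from N b (hdp N u) = Suc (dist_from N b (tlp N u))) \<or>
         (\<not> snd u \<and> dist_from N b (tlp N u) = Suc (dist_from N b (hdp N u)))"
  using assms dist_nxt[OF assms(1) _ assms(3)] by (auto simp: darts_def hdp_def tlp_def)

lemma ob_eq: "over_both N ov (fst u) = (ov (tlp N u) \<and> ov (hdp N u))"
  by (auto simp: over_both_def tlp_def hdp_def)

lemma step_facts:
  assumes kd: "knot_diagram N cr ov lr" and asc: "ascending N cr ov b" and u: "u \<in> darts N"
    and v: "v = phi N cr lr u"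
  shows "ov (tlp N v) = (\<not> ov (hdp N u))"
    "ov (hdp N u) = (dist_from N b (tlp N v) < dist_from N b (hdp N u))"
    "dist_from N b (tlp N v) \<noteq> dist_from N b (hdp N u)"
proof -
  have b: "b < N" using asc by (simp add: ascending_def)
  have h: "hdp N u < N" using u by (auto simp: hdp_def nxt_lt darts_def)
  have t: "tlp N v = partner N cr (hdp N u)" using phi_props(2)[OF kd u] v by simp
  have p: "partner N cr (hdp N u) < N \<and> partner N cr (hdp N u) \<noteq> hdp N u"
    using partner_props(1)[OF kd h] by simp
  show "ov (tlp N v) = (\<not> ov (hdp N u))" using t partner_ov(1)[OF kd h] by auto
  show "ov (hdp N u) = (dist_from N b (tlp N v) < dist_from N b (hdp N u))"
    using t asc_ov[OF kd asc h] by simp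
  show "dist_from N b (tlp N v) \<noteq> dist_from N b (hdp N u)"
  proof
    assume "dist_from N b (tlp N v) = dist_from N b (hdp N u)"
    then have "tlp N v = hdp N u" using dist_inj[OF b _ h] t p by metis
    then show False using t p by simp
  qed
qed

lemma tlp_lt: "u \<in> darts N \<Longrightarrow> tlp N u < N"
  by (auto simp: tlp_def nxt_lt darts_def)

lemma cycle3:
  assumes kd: "knot_diagram N cr ov lr" and asc: "ascending N cr ov b"
    and d: "u1 \<in> darts N" "u2 \<in> darts N" "u3 \<in> darts N"
    and c: "phi N cr lr u1 = u2" "phi N cr lr u2 = u3" "phi N cr lr u3 = u1"
    and nb: "fst u1 \<noteq> b" "fst u2 \<noteq> b" "fst u3 \<noteq> b"
    and no: "\<not> over_both N ov (fst u1)" "\<not> over_both N ov (fst u2)" "\<not> over_both N ov (fst u3)"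
  shows "u1 = u2"
proof -
  have b: "b < N" using asc by (simp add: ascending_def)
  note s1 = step_facts[OF kd asc d(1) c(1)[symmetric]]
  note s2 = step_facts[OF kd asc d(2) c(2)[symmetric]]
  note s3 = step_facts[OF kd asc d(3) c(3)[symmetric]]
  have "snd u1 = snd u2 \<and> dist_from N b (tlp N u1) = dist_from N b (tlp N u2)"
    by (rule arith3[OF s1(1) s2(1) s3(1) s1(2) s2(2) s3(2) s1(3) s2(3) s3(3)
       no(1)[unfolded ob_eq] no(2)[unfolded ob_eq] no(3)[unfolded ob_eq]
       dart_C[OF b d(1) nb(1)] dart_C[OF b d(2) nb(2)] dart_C[OF b d(3) nb(3)]])
  then show ?thesis using dart_eq_tl[OF d(1,2)] dist_inj[OF b tlp_lt[OF d(1)] tlp_lt[OF d(2)]] by blast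
qed

lemma cycle2:
  assumes kd: "knot_diagram N cr ov lr" and asc: "ascending N cr ov b"
    and d: "u1 \<in> darts N" "u2 \<in> darts N"
    and c: "phi N cr lr u1 = u2" "phi N cr lr u2 = u1"
    and nb: "fst u1 \<noteq> b" "fst u2 \<noteq> b"
    and no: "\<not> over_both N ov (fst u1)" "\<not> over_both N ov (fst u2)"
  shows "u1 = u2"
proof -
  have b: "b < N" using asc by (simp add: ascending_def)
  note s1 = step_facts[OF kd asc d(1) c(1)[symmetric]]
  note s2 = step_facts[OF kd asc d(2) c(2)[symmetric]]
  have "snd u1 = snd u2 \<and> dist_from N b (tlp N u1) = dist_from N b (tlp N u2)"
    by (rule arith2[OF s1(1) s2(1) s1(2) s2(2) s1(3) s2(3)
       no(1)[unfolded ob_eq] no(2)[unfolded ob_eq]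
       dart_C[OF b d(1) nb(1)] dart_C[OF b d(2) nb(2)]])
  then show ?thesis using dart_eq_tl[OF d(1,2)] dist_inj[OF b tlp_lt[OF d(1)] tlp_lt[OF d(2)]] by blast
qed


lemma funpow_split:
  assumes "i \<le> j" shows "(f ^^ j) x = (f ^^ i) ((f ^^ (j - i)) x)"
proof -
  have "(f ^^ (i + (j - i))) x = (f ^^ i) ((f ^^ (j - i)) x)" unfolding funpow_add o_apply ..
  then show ?thesis using assms by simp
qed

lemma funpow_darts:
  assumes kd: "knot_diagram N cr ov lr" and x: "x \<in> darts N"
  shows "(phi N cr lr ^^ k) x \<in> darts N"
  by (induction k) (auto simp: x phi_props(1)[OF kd])

lemma funpow_inj:
  assumes kd: "knot_diagram N cr ov lr"
  shows "y \<in> darts N \<Longrightarrow> z \<in> darts N \<Longrightarrow> (phi N cr lr ^^ k) y = (phi N cr lr ^^ k) z \<Longrightarrow> y = z"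
proof (induction k arbitrary: y z)
  case 0
  then show ?case by simp
next
  case (Suc k)
  have "(phi N cr lr ^^ k) (phi N cr lr y) = (phi N cr lr ^^ k) (phi N cr lr z)"
    using Suc.prems(3) by (simp add: funpow_Suc_right del: funpow.simps)
  then have "phi N cr lr y = phi N cr lr z"
    using Suc.IH phi_props(1)[OF kd Suc.prems(1)] phi_props(1)[OF kd Suc.prems(2)] by blast
  then show ?case using phi_inj[OF kd Suc.prems(1,2)] by blast
qed

lemma finite_darts: "finite (darts N)"
  by (simp add: darts_def)

lemma period_exists:
  assumes kd: "knot_diagram N cr ov lr" and x: "x \<in> darts N"
  shows "\<exists>p>0. (phi N cr lr ^^ p) x = x"
proof -
  let ?f = "\<lambda>k. (phi N cr lr ^^ k) x"
  have "range ?f \<subseteq> darts N" using funpow_darts[OF kd x] by blast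
  then have "finite (range ?f)" using finite_darts finite_subset by blast
  then have "\<not> inj ?f" using finite_imageD infinite_UNIV_nat by blast
  then obtain i j where ij: "i \<noteq> j" "?f i = ?f j" unfolding inj_def by blast
  then obtain i j where ij: "i < j" "?f i = ?f j"
    by (metis linorder_neq_iff)
  have "?f j = (phi N cr lr ^^ i) ((phi N cr lr ^^ (j - i)) x)"
    using ij(1) by (intro funpow_split) simp
  then have "(phi N cr lr ^^ (j - i)) x = x"
    using funpow_inj[OF kd funpow_darts[OF kd x] x] ij(2) by metis
  then show ?thesis using ij(1) by (intro exI[of _ "j - i"]) simp
qed

lemma funpow_mult:
  assumes "(f ^^ p) x = x" shows "(f ^^ (p * n)) x = x"
proof (induction n)
  case (Suc n)
  have e: "p * Suc n = p * n + p" by simp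
  have "(f ^^ (p * Suc n)) x = (f ^^ (p * n)) ((f ^^ p) x)"
    unfolding e funpow_add o_apply ..
  then show ?case using Suc assms by simp
qed simp

lemma funpow_mod:
  assumes "(f ^^ p) x = x" shows "(f ^^ k) x = (f ^^ (k mod p)) x"
proof -
  have e: "k = k mod p + p * (k div p)" by simp
  have "(f ^^ (k mod p + p * (k div p))) x = (f ^^ (k mod p)) ((f ^^ (p * (k div p))) x)"
    unfolding funpow_add o_apply ..
  then have "(f ^^ k) x = (f ^^ (k mod p)) ((f ^^ (p * (k div p))) x)" using e by simp
  then show ?thesis using funpow_mult[OF assms] by simp
qed

lemma face_same:
  assumes kd: "knot_diagram N cr ov lr" and x: "x \<in> darts N" and y: "y \<in> face_of N cr lr x"
  shows "face_of N cr lr y = face_of N cr lr x"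
proof -
  obtain p where p: "p > 0" "(phi N cr lr ^^ p) x = x" using period_exists[OF kd x] by blast
  obtain m where m: "y = (phi N cr lr ^^ m) x" using y by (auto simp: face_of_def)
  show ?thesis
  proof
    show "face_of N cr lr y \<subseteq> face_of N cr lr x"
    proof
      fix z assume "z \<in> face_of N cr lr y"
      then obtain k where "z = (phi N cr lr ^^ k) y" by (auto simp: face_of_def)
      then have "z = (phi N cr lr ^^ (k + m)) x" using m by (simp add: funpow_add)
      then show "z \<in> face_of N cr lr x" by (auto simp: face_of_def)
    qed
  next
    show "face_of N cr lr x \<subseteq> face_of N cr lr y"
    proof
      fix z assume "z \<in> face_of N cr lr x"
      then obtain k where k: "z = (phi N cr lr ^^ k) x" by (auto simp: face_of_def)
      have e: "k + m * (p - 1) + m = k + p * m" using p(1)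
        by (cases p) (auto simp: algebra_simps)
      have "(phi N cr lr ^^ (k + m * (p - 1))) y = (phi N cr lr ^^ (k + m * (p - 1) + m)) x"
        using m by (simp add: funpow_add)
      also have "\<dots> = (phi N cr lr ^^ k) ((phi N cr lr ^^ (p * m)) x)"
        unfolding e by (simp add: funpow_add)
      also have "\<dots> = z" using funpow_mult[OF p(2)] k by simp
      finally show "z \<in> face_of N cr lr y" by (auto simp: face_of_def)
    qed
  qed
qed

lemma face_card:
  assumes kd: "knot_diagram N cr ov lr" and x: "x \<in> darts N"
  obtains p where "p > 0" "(phi N cr lr ^^ p) x = x" "card (face_of N cr lr x) = p"
    "\<And>i j. i < p \<Longrightarrow> j < p \<Longrightarrow> (phi N cr lr ^^ i) x = (phi N cr lr ^^ j) x \<Longrightarrow> i = j"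
proof -
  let ?P = "\<lambda>p. p > 0 \<and> (phi N cr lr ^^ p) x = x"
  let ?f = "\<lambda>k. (phi N cr lr ^^ k) x"
  define p where "p = (LEAST p. ?P p)"
  have Pp: "?P p" unfolding p_def using period_exists[OF kd x] by (metis (mono_tags, lifting) LeastI)
  have minp: "\<And>q. ?P q \<Longrightarrow> p \<le> q" unfolding p_def by (simp add: Least_le)
  have injp: "i = j" if ij: "i < p" "j < p" "?f i = ?f j" for i j
  proof (rule ccontr)
    assume "i \<noteq> j"
    then consider "i < j" | "j < i" by linarith
    then show False
    proof cases
      case 1
      have "?f j = (phi N cr lr ^^ i) ((phi N cr lr ^^ (j - i)) x)"
        using 1 by (intro funpow_split) simp
      then have "(phi N cr lr ^^ (j - i)) x = x"
        using funpow_inj[OF kd funpow_darts[OF kd x] x] ij(3) by metis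
      then have "p \<le> j - i" using minp 1 by simp
      then show False using ij 1 by linarith
    next
      case 2
      have "?f i = (phi N cr lr ^^ j) ((phi N cr lr ^^ (i - j)) x)"
        using 2 by (intro funpow_split) simp
      then have "(phi N cr lr ^^ (i - j)) x = x"
        using funpow_inj[OF kd funpow_darts[OF kd x] x] ij(3) by metis
      then have "p \<le> i - j" using minp 2 by simp
      then show False using ij 2 by linarith
    qed
  qed
  have "face_of N cr lr x = ?f ` {..<p}"
  proof
    show "face_of N cr lr x \<subseteq> ?f ` {..<p}"
    proof
      fix z assume "z \<in> face_of N cr lr x"
      then obtain k where k: "z = ?f k" by (auto simp: face_of_def)
      then have "z = ?f (k mod p)" using funpow_mod[OF conjunct2[OF Pp], of k] by simp
      moreover have "k mod p < p" using Pp by simp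
      ultimately show "z \<in> ?f ` {..<p}" by blast
    qed
  next
    show "?f ` {..<p} \<subseteq> face_of N cr lr x" by (auto simp: face_of_def)
  qed
  moreover have "inj_on ?f {..<p}" using injp by (auto simp: inj_on_def)
  ultimately have "card (face_of N cr lr x) = p" by (simp add: card_image)
  then show ?thesis using that Pp injp by blast
qed


lemma bad_face_main:
  assumes kd: "knot_diagram N cr ov lr" and asc: "ascending N cr ov b"
    and x: "x \<in> darts N" and bad: "bad_face N ov (face_of N cr lr x)"
  shows "b \<in> fst ` face_of N cr lr x"
proof (rule ccontr)
  let ?F = "face_of N cr lr x"
  let ?g = "phi N cr lr"
  assume nb: "b \<notin> fst ` ?F"
  obtain p where p: "p > 0" "(?g ^^ p) x = x" "card ?F = p"
    "\<And>i j. i < p \<Longrightarrow> j < p \<Longrightarrow> (?g ^^ i) x = (?g ^^ j) x \<Longrightarrow> i = j"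
    using face_card[OF kd x] by blast
  have c23: "card ?F = 2 \<or> card ?F = 3" and no: "\<forall>d\<in>?F. \<not> over_both N ov (fst d)"
    using bad unfolding bad_face_def admits_RII_def admits_RIII_def by auto
  have inF: "(?g ^^ k) x \<in> ?F" for k by (auto simp: face_of_def)
  have in1: "x \<in> ?F" using inF[of 0] by simp
  have in2: "?g x \<in> ?F" using inF[of 1] by simp
  have in3: "?g (?g x) \<in> ?F" using inF[of 2] by (simp add: numeral_2_eq_2)
  have d1: "x \<in> darts N" by (rule x)
  have d2: "?g x \<in> darts N" using phi_props(1)[OF kd x] .
  have d3: "?g (?g x) \<in> darts N" using phi_props(1)[OF kd d2] .
  have ne: "x \<noteq> ?g x"
  proof
    assume "x = ?g x"
    then have "(?g ^^ 0) x = (?g ^^ 1) x" by simp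
    then show False using p(4)[of 0 1] c23 p(3) by linarith
  qed
  from c23 show False
  proof
    assume "card ?F = 2"
    then have "?g (?g x) = x" using p(2,3) by (simp add: numeral_2_eq_2)
    then have "x = ?g x"
      using cycle2[OF kd asc d1 d2 refl] nb in1 in2 no by (metis image_eqI)
    then show False using ne by simp
  next
    assume "card ?F = 3"
    then have "?g (?g (?g x)) = x" using p(2,3) by (simp add: numeral_3_eq_3)
    then have "x = ?g x"
      using cycle3[OF kd asc d1 d2 d3 refl refl] nb in1 in2 in3 no by (metis image_eqI)
    then show False using ne by simp
  qed
qed

theorem lemma5p6:
  fixes N :: nat and cr :: "nat \<Rightarrow> 'c" and ov lr :: "nat \<Rightarrow> bool" and b :: nat
  assumes "knot_diagram N cr ov lr"
    and "ascending N cr ov b"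
  shows "(\<forall>F\<in>faces N cr lr. bad_face N ov F \<longrightarrow> b \<in> fst ` F)
         \<and> card {F\<in>faces N cr lr. bad_face N ov F} \<le> 2"
proof -
  have P1: "\<forall>F\<in>faces N cr lr. bad_face N ov F \<longrightarrow> b \<in> fst ` F"
    using bad_face_main[OF assms] by (auto simp: faces_def)
  have sub: "{F\<in>faces N cr lr. bad_face N ov F} \<subseteq> {face_of N cr lr (b, True), face_of N cr lr (b, False)}"
  proof
    fix F assume F: "F \<in> {F\<in>faces N cr lr. bad_face N ov F}"
    then obtain x where x: "x \<in> darts N" "F = face_of N cr lr x" by (auto simp: faces_def)
    from F P1 obtain y where y: "y \<in> F" "fst y = b" by auto
    have "F = face_of N cr lr y" using face_same[OF assms(1) x(1)] y x(2) by simp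
    moreover have "y = (b, True) \<or> y = (b, False)" using y(2) by (cases y) auto
    ultimately show "F \<in> {face_of N cr lr (b, True), face_of N cr lr (b, False)}" by auto
  qed
  have "card {F\<in>faces N cr lr. bad_face N ov F} \<le> card {face_of N cr lr (b, True), face_of N cr lr (b, False)}"
    by (rule card_mono[OF _ sub]) simp
  also have "\<dots> \<le> 2" by (simp add: card_insert_if)
  finally show ?thesis using P1 by simp
qed

end
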